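(* For all $x\in\mathbb{C}$ and all integers $n\ge0$, \[ \sum_{k=0}^n(-1)^kx^{n-k}\big(L_{k+1}+(x-2)F_k\big)=(-1)^nF_{n+1},\qquad \sum_{k=0}^n(-1)^kx^{n-k}\big(5F_{k+1}+(x-2)L_k\big)=(-1)^nL_{n+1}+2x^{n+1}, \] \[ \sum_{k=0}^n(-1)^kx^{n-k}\big(Q_{k+1}+2(x-1)P_k\big)=2(-1)^nP_{n+1},\qquad \sum_{k=0}^n(-1)^kx^{n-k}\big(4P_{k+1}+(x-1)Q_k\big)=(-1)^nQ_{n+1}+2x^{n+1}. \]
   Context: $F_n,L_n$ are the Fibonacci and Lucas numbers ($F_0=0,F_1=1,L_0=2,L_1=1$, $W_n=W_{n-1}+W_{n-2}$). $P_n,Q_n$ are the Pell and Pell–Lucas numbers: $P_0=0$, $P_1=1$, $Q_0=2$, $Q_1=2$, $W_n=2W_{n-1}+W_{n-2}$. *)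

theory Defs
  imports Complex_Main
begin

fun fibo :: "nat \<Rightarrow> int" where
  "fibo 0 = 0" | "fibo (Suc 0) = 1" | "fibo (Suc (Suc n)) = fibo (Suc n) + fibo n"

fun lucas :: "nat \<Rightarrow> int" where
  "lucas 0 = 2" | "lucas (Suc 0) = 1" | "lucas (Suc (Suc n)) = lucas (Suc n) + lucas n"

fun pell :: "nat \<Rightarrow> int" where
  "pell 0 = 0" | "pell (Suc 0) = 1" | "pell (Suc (Suc n)) = 2 * pell (Suc n) + pell n"

fun pell_lucas :: "nat \<Rightarrow> int" where
  "pell_lucas 0 = 2" | "pell_lucas (Suc 0) = 2"
| "pell_lucas (Suc (Suc n)) = 2 * pell_lucas (Suc n) + pell_lucas n"

end

theory Submission
  imports Defs
begin

lemma lf: "lucas (Suc n) = fibo (Suc n) + 2 * fibo n \<and> 5 * fibo (Suc (Suc n)) = lucas (Suc (Suc n)) + 2 * lucas (Suc n)"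
  by (induction n rule: fibo.induct) auto

lemma pq: "pell_lucas (Suc n) = 2 * pell (Suc n) + 2 * pell n \<and> 4 * pell (Suc (Suc n)) = pell_lucas (Suc (Suc n)) + pell_lucas (Suc n)"
  by (induction n rule: fibo.induct) auto

lemma sum_step:
  fixes x :: complex
  shows "(\<Sum>k=0..Suc n. (-1)^k * x^(Suc n-k) * g k) = x * (\<Sum>k=0..n. (-1)^k * x^(n-k) * g k) + (-1)^(Suc n) * g (Suc n)"
proof -
  have "(\<Sum>k=0..n. (-1)^k * x^(Suc n-k) * g k) = x * (\<Sum>k=0..n. (-1)^k * x^(n-k) * g k)"
    unfolding sum_distrib_left
    by (rule sum.cong) (auto simp: Suc_diff_le)
  then show ?thesis by simp
qed

theorem corollary10:
  fixes x :: complex and n :: nat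
  shows "(\<Sum>k=0..n. (-1)^k * x^(n-k) * (of_int (lucas (k+1)) + (x - 2) * of_int (fibo k)))
           = (-1)^n * of_int (fibo (n+1))
    \<and> (\<Sum>k=0..n. (-1)^k * x^(n-k) * (5 * of_int (fibo (k+1)) + (x - 2) * of_int (lucas k)))
           = (-1)^n * of_int (lucas (n+1)) + 2 * x^(n+1)
    \<and> (\<Sum>k=0..n. (-1)^k * x^(n-k) * (of_int (pell_lucas (k+1)) + 2 * (x - 1) * of_int (pell k)))
           = 2 * (-1)^n * of_int (pell (n+1))
    \<and> (\<Sum>k=0..n. (-1)^k * x^(n-k) * (4 * of_int (pell (k+1)) + (x - 1) * of_int (pell_lucas k)))
           = (-1)^n * of_int (pell_lucas (n+1)) + 2 * x^(n+1)"
proof (induction n)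
  case 0
  then show ?case by simp
next
  case (Suc n)
  have a: "complex_of_int (lucas (Suc (Suc n))) = of_int (fibo (Suc (Suc n))) + 2 * of_int (fibo (Suc n))"
    using lf[of "Suc n"] by (metis of_int_add of_int_mult of_int_numeral)
  have b: "5 * complex_of_int (fibo (Suc (Suc n))) = of_int (lucas (Suc (Suc n))) + 2 * of_int (lucas (Suc n))"
    using lf[of n] by (metis of_int_add of_int_mult of_int_numeral)
  have c: "complex_of_int (pell_lucas (Suc (Suc n))) = 2 * of_int (pell (Suc (Suc n))) + 2 * of_int (pell (Suc n))"
    using pq[of "Suc n"] by (metis of_int_add of_int_mult of_int_numeral)
  have d: "4 * complex_of_int (pell (Suc (Suc n))) = of_int (pell_lucas (Suc (Suc n))) + of_int (pell_lucas (Suc n))"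
    using pq[of n] by (metis of_int_add of_int_mult of_int_numeral)
  note IH = Suc.IH
  let ?s = "\<lambda>g. (\<Sum>k=0..n. (-1)^k * x^(n-k) * (g k::complex))"
  have e1: "?s (\<lambda>k. of_int (lucas (k+1)) + (x - 2) * of_int (fibo k)) = (-1)^n * of_int (fibo (n+1))"
    using IH by blast
  have e2: "?s (\<lambda>k. 5 * of_int (fibo (k+1)) + (x - 2) * of_int (lucas k)) = (-1)^n * of_int (lucas (n+1)) + 2 * x^(n+1)"
    using IH by blast
  have e3: "?s (\<lambda>k. of_int (pell_lucas (k+1)) + 2 * (x - 1) * of_int (pell k)) = 2 * (-1)^n * of_int (pell (n+1))"
    using IH by blast
  let ?s' = "\<lambda>g. (\<Sum>k=0..Suc n. (-1)^k * x^(Suc n-k) * (g k::complex))"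
  have e4: "?s (\<lambda>k. 4 * of_int (pell (k+1)) + (x - 1) * of_int (pell_lucas k)) = (-1)^n * of_int (pell_lucas (n+1)) + 2 * x^(n+1)"
    using IH by blast
  note ss = sum_step[where n=n and x=x]
  have f1: "?s' (\<lambda>k. of_int (lucas (k+1)) + (x - 2) * of_int (fibo k)) = (-1)^(Suc n) * of_int (fibo (Suc n+1))"
    unfolding ss e1 using a by (simp add: algebra_simps)
  have f2: "?s' (\<lambda>k. 5 * of_int (fibo (k+1)) + (x - 2) * of_int (lucas k)) = (-1)^(Suc n) * of_int (lucas (Suc n+1)) + 2 * x^(Suc n+1)"
    unfolding ss e2 using b by (simp add: algebra_simps)
  have f3: "?s' (\<lambda>k. of_int (pell_lucas (k+1)) + 2 * (x - 1) * of_int (pell k)) = 2 * (-1)^(Suc n) * of_int (pell (Suc n+1))"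
    unfolding ss e3 using c by (simp add: algebra_simps)
  have f4: "?s' (\<lambda>k. 4 * of_int (pell (k+1)) + (x - 1) * of_int (pell_lucas k)) = (-1)^(Suc n) * of_int (pell_lucas (Suc n+1)) + 2 * x^(Suc n+1)"
    unfolding ss e4 using d by (simp add: algebra_simps)
  show ?case using f1 f2 f3 f4 by simp
qed

end
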